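(* Let $G$ be an ordered abelian group, $\beta_0,\beta_1,\beta_{0,1}\in G$, and for $e=0,1$ let $(\gamma_{e,j})_{j<\lambda_e}$ ($\lambda_e$ a limit ordinal) be a well-ordered, monotone increasing family of elements $\ge0$ of $G$ without last element. Put $P_{0,j_0}=\beta_0+\gamma_{0,j_0}$, $P_{1,j_1}=\beta_1+\gamma_{1,j_1}$ and $P_{0,1,j_0,j_1}=\beta_{0,1}+\gamma_{0,j_0}+\gamma_{1,j_1}$. Then there exist ordinals $\rho_0<\lambda_0$, $\rho_1<\lambda_1$, a subset $A\subset[1,\lambda_0)$ and a map $\sigma:A\to[1,\lambda_1)$ such that $P_{0,j_0}$, $P_{1,j_1}$, $P_{0,1,j_0,j_1}$ are pairwise different for all $\rho_0<j_0<\lambda_0$, $\rho_1<j_1<\lambda_1$ with $j_1\neq\sigma(j_0)$ whenever $j_0\in A$. In particular, for all ordinals $\nu_0<\lambda_0$, $\nu_1<\lambda_1$ there exist $\nu_0<j_0<\lambda_0$, $\nu_1<j_1<\lambda_1$ such that $P_{0,j_0}$, $P_{1,j_1}$, $P_{0,1,j_0,j_1}$ are pairwise different. *)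

theory Defs
  imports Main
begin

text \<open>Indices j of a wellorder type stand for the ordinals j below lambda.
  The half-open interval [1, lambda) consists of all indices that are not the least one.\<close>
definition pos_idx :: "'j::wellorder set" where
  "pos_idx = {j. \<exists>k. k < j}"

end

theory Submission
  imports Defs
begin

theorem lemma1p3:
  fixes \<beta>0 \<beta>1 \<beta>01 :: "'g::linordered_ab_group_add"
    and \<gamma>0 :: "'i::wellorder \<Rightarrow> 'g"
    and \<gamma>1 :: "'j::wellorder \<Rightarrow> 'g"
  assumes lim0: "\<forall>i::'i. \<exists>i'. i < i'"
    and lim1: "\<forall>j::'j. \<exists>j'. j < j'"
    and mono0: "strict_mono \<gamma>0"
    and mono1: "strict_mono \<gamma>1"
    and nonneg0: "\<forall>i. 0 \<le> \<gamma>0 i"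
    and nonneg1: "\<forall>j. 0 \<le> \<gamma>1 j"
  shows "(\<exists>(\<rho>0::'i) (\<rho>1::'j) (A::'i set) (\<sigma>::'i \<Rightarrow> 'j).
            A \<subseteq> pos_idx \<and> \<sigma> ` A \<subseteq> pos_idx \<and>
            (\<forall>j0 j1. \<rho>0 < j0 \<and> \<rho>1 < j1 \<and> (j0 \<in> A \<longrightarrow> j1 \<noteq> \<sigma> j0) \<longrightarrow>
               \<beta>0 + \<gamma>0 j0 \<noteq> \<beta>1 + \<gamma>1 j1 \<and>
               \<beta>0 + \<gamma>0 j0 \<noteq> \<beta>01 + \<gamma>0 j0 + \<gamma>1 j1 \<and>
               \<beta>1 + \<gamma>1 j1 \<noteq> \<beta>01 + \<gamma>0 j0 + \<gamma>1 j1))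
       \<and> (\<forall>(\<nu>0::'i) (\<nu>1::'j). \<exists>j0 j1. \<nu>0 < j0 \<and> \<nu>1 < j1 \<and>
               \<beta>0 + \<gamma>0 j0 \<noteq> \<beta>1 + \<gamma>1 j1 \<and>
               \<beta>0 + \<gamma>0 j0 \<noteq> \<beta>01 + \<gamma>0 j0 + \<gamma>1 j1 \<and>
               \<beta>1 + \<gamma>1 j1 \<noteq> \<beta>01 + \<gamma>0 j0 + \<gamma>1 j1)"
proof -
  have canc: "\<And>a b x y::'g. (a + x = b + x + y) = (a = b + y)"
    by (simp add: add.commute add.left_commute)
  have canc2: "\<And>a b x y::'g. (a + y = b + x + y) = (a = b + x)"
    by (simp add: add.assoc[symmetric])
  obtain r0 :: 'i where r0: "\<forall>j>r0. \<beta>01 + \<gamma>0 j \<noteq> \<beta>1"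
  proof (cases "\<exists>k. \<beta>01 + \<gamma>0 k = \<beta>1")
    case True
    then obtain k where k: "\<beta>01 + \<gamma>0 k = \<beta>1" by blast
    have "\<forall>j>k. \<beta>01 + \<gamma>0 j \<noteq> \<beta>1"
    proof (intro allI impI)
      fix j assume "k < j"
      then have "\<gamma>0 k < \<gamma>0 j" using mono0 by (simp add: strict_mono_less)
      then show "\<beta>01 + \<gamma>0 j \<noteq> \<beta>1" using k by auto
    qed
    then show ?thesis using that by blast
  next
    case False then show ?thesis using that by blast
  qed
  obtain r1 :: 'j where r1: "\<forall>j>r1. \<beta>01 + \<gamma>1 j \<noteq> \<beta>0"
  proof (cases "\<exists>k. \<beta>01 + \<gamma>1 k = \<beta>0")
    case True
    then obtain k where k: "\<beta>01 + \<gamma>1 k = \<beta>0" by blast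
    have "\<forall>j>k. \<beta>01 + \<gamma>1 j \<noteq> \<beta>0"
    proof (intro allI impI)
      fix j assume "k < j"
      then have "\<gamma>1 k < \<gamma>1 j" using mono1 by (simp add: strict_mono_less)
      then show "\<beta>01 + \<gamma>1 j \<noteq> \<beta>0" using k by auto
    qed
    then show ?thesis using that by blast
  next
    case False then show ?thesis using that by blast
  qed
  have bc: "\<beta>0 + \<gamma>0 j0 \<noteq> \<beta>01 + \<gamma>0 j0 + \<gamma>1 j1 \<and> \<beta>1 + \<gamma>1 j1 \<noteq> \<beta>01 + \<gamma>0 j0 + \<gamma>1 j1"
    if "r0 < j0" "r1 < j1" for j0 j1
  proof -
    have "\<beta>01 + \<gamma>0 j0 \<noteq> \<beta>1" "\<beta>01 + \<gamma>1 j1 \<noteq> \<beta>0" using r0 r1 that by auto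
    then show ?thesis by (simp add: canc canc2)
  qed
  define A where "A = {j0. \<exists>j1. j1 \<in> pos_idx \<and> \<beta>0 + \<gamma>0 j0 = \<beta>1 + \<gamma>1 j1} \<inter> pos_idx"
  define \<sigma> where "\<sigma> = (\<lambda>j0. THE j1. \<beta>0 + \<gamma>0 j0 = \<beta>1 + \<gamma>1 j1)"
  have uniq: "\<beta>0 + \<gamma>0 j0 = \<beta>1 + \<gamma>1 j1 \<Longrightarrow> \<sigma> j0 = j1" for j0 j1
    unfolding \<sigma>_def
  proof (rule the_equality)
    fix j assume "\<beta>0 + \<gamma>0 j0 = \<beta>1 + \<gamma>1 j1" "\<beta>0 + \<gamma>0 j0 = \<beta>1 + \<gamma>1 j"
    then have "\<gamma>1 j = \<gamma>1 j1" by simp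
    then show "j = j1" using mono1 strict_mono_eq by blast
  qed
  have Asub: "A \<subseteq> pos_idx" unfolding A_def by blast
  have sA: "\<sigma> ` A \<subseteq> pos_idx"
  proof
    fix y assume "y \<in> \<sigma> ` A"
    then obtain x where x: "x \<in> A" "y = \<sigma> x" by blast
    then obtain j1 where "j1 \<in> pos_idx" "\<beta>0 + \<gamma>0 x = \<beta>1 + \<gamma>1 j1" unfolding A_def by blast
    then show "y \<in> pos_idx" using x uniq by simp
  qed
  have a: "\<beta>0 + \<gamma>0 j0 \<noteq> \<beta>1 + \<gamma>1 j1"
    if "r0 < j0" "r1 < j1" "j0 \<in> A \<longrightarrow> j1 \<noteq> \<sigma> j0" for j0 j1
  proof
    assume e: "\<beta>0 + \<gamma>0 j0 = \<beta>1 + \<gamma>1 j1"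
    have "j0 \<in> pos_idx" "j1 \<in> pos_idx" using that unfolding pos_idx_def by blast+
    then have "j0 \<in> A" using e unfolding A_def by blast
    then show False using that uniq[OF e] by blast
  qed
  have part1: "\<exists>(\<rho>0::'i) (\<rho>1::'j) (A::'i set) (\<sigma>::'i \<Rightarrow> 'j).
            A \<subseteq> pos_idx \<and> \<sigma> ` A \<subseteq> pos_idx \<and>
            (\<forall>j0 j1. \<rho>0 < j0 \<and> \<rho>1 < j1 \<and> (j0 \<in> A \<longrightarrow> j1 \<noteq> \<sigma> j0) \<longrightarrow>
               \<beta>0 + \<gamma>0 j0 \<noteq> \<beta>1 + \<gamma>1 j1 \<and>
               \<beta>0 + \<gamma>0 j0 \<noteq> \<beta>01 + \<gamma>0 j0 + \<gamma>1 j1 \<and>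
               \<beta>1 + \<gamma>1 j1 \<noteq> \<beta>01 + \<gamma>0 j0 + \<gamma>1 j1)"
    apply (rule exI[of _ r0], rule exI[of _ r1], rule exI[of _ A], rule exI[of _ \<sigma>])
    using Asub sA a bc by blast
  have part2: "\<exists>j0 j1. \<nu>0 < j0 \<and> \<nu>1 < j1 \<and>
               \<beta>0 + \<gamma>0 j0 \<noteq> \<beta>1 + \<gamma>1 j1 \<and>
               \<beta>0 + \<gamma>0 j0 \<noteq> \<beta>01 + \<gamma>0 j0 + \<gamma>1 j1 \<and>
               \<beta>1 + \<gamma>1 j1 \<noteq> \<beta>01 + \<gamma>0 j0 + \<gamma>1 j1" for \<nu>0 :: 'i and \<nu>1 :: 'j
  proof -
    obtain j0 where j0: "max \<nu>0 r0 < j0" using lim0 by blast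
    obtain j1 where j1: "max \<nu>1 r1 < j1" using lim1 by blast
    obtain j1' where j1': "j1 < j1'" using lim1 by blast
    have "\<gamma>1 j1 < \<gamma>1 j1'" using mono1 j1' by (simp add: strict_mono_less)
    then have "\<beta>0 + \<gamma>0 j0 \<noteq> \<beta>1 + \<gamma>1 j1 \<or> \<beta>0 + \<gamma>0 j0 \<noteq> \<beta>1 + \<gamma>1 j1'" by auto
    moreover have "max \<nu>1 r1 < j1'" using j1 j1' by order
    moreover have "\<nu>0 < j0" "r0 < j0" using j0 by auto
    moreover have "\<nu>1 < j1" "r1 < j1" "\<nu>1 < j1'" "r1 < j1'" using j1 j1' by auto
    ultimately show ?thesis using bc[of j0 j1] bc[of j0 j1'] by blast
  qed
  show ?thesis using part1 part2 by (intro conjI allI) simp_all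
qed

end
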